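(* For every positive integer $n$ and every $k\in\{0,1,\dots,n\}$, $$\sum_{\substack{J\subseteq[n]\\ |J|=n-k}}\ \prod_{i=1}^n\,[\operatorname{st}^B_i(J)+1]_q\;=\;[2k]!!_q\cdot\operatorname{Stir}^B_q(n,k).$$
   Context: $[m]_q=1+q+\dots+q^{m-1}$ for integers $m\ge1$. The $q$-double factorial is $[m]!!_q=[m]_q[m-2]_q[m-4]_q\cdots$, the product ending at $[1]_q$ or $[2]_q$ according to the parity of $m$, with $[0]!!_q=1$; thus $[2k]!!_q=[2k]_q[2k-2]_q\cdots[2]_q$. The type $B$ $q$-Stirling numbers $\operatorname{Stir}^B_q(n,k)$ are defined by $\operatorname{Stir}^B_q(0,k)=1$ if $k=0$ and $0$ otherwise, and for $n\ge1$ by $\operatorname{Stir}^B_q(n,k)=\operatorname{Stir}^B_q(n-1,k-1)+[2k+1]_q\operatorname{Stir}^B_q(n-1,k)$ (with $\operatorname{Stir}^B_q(n-1,-1)=0$). For $J\subseteq[n]$ and $i\in[n]$, the type $B$ $J$-staircase is $\operatorname{st}^B_i(J)=2\,|\{1,\dots,i-1\}\setminus J|+[i\notin J]$, where $[P]$ is $1$ if $P$ holds and $0$ otherwise. *)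

theory Defs
  imports Main
begin

definition qint :: "'a::comm_semiring_1 \<Rightarrow> nat \<Rightarrow> 'a" where
  "qint q m = (\<Sum>i<m. q ^ i)"

fun qdfact :: "'a::comm_semiring_1 \<Rightarrow> nat \<Rightarrow> 'a" where
  "qdfact q 0 = 1"
| "qdfact q (Suc 0) = 1"
| "qdfact q (Suc (Suc m)) = qint q (Suc (Suc m)) * qdfact q m"

fun stirB :: "'a::comm_semiring_1 \<Rightarrow> nat \<Rightarrow> nat \<Rightarrow> 'a" where
  "stirB q 0 k = (if k = 0 then 1 else 0)"
| "stirB q (Suc n) k =
     (if k = 0 then 0 else stirB q n (k - 1)) + qint q (2 * k + 1) * stirB q n k"

definition stB :: "nat set \<Rightarrow> nat \<Rightarrow> nat" where
  "stB J i = 2 * card ({1..<i} - J) + (if i \<notin> J then 1 else 0)"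

end

theory Submission
  imports Defs
begin

definition PP :: "'a::comm_ring_1 \<Rightarrow> nat \<Rightarrow> nat set \<Rightarrow> 'a" where
  "PP q n J = (\<Prod>i=1..n. qint q (stB J i + 1))"

definition GG :: "'a::comm_ring_1 \<Rightarrow> nat \<Rightarrow> nat \<Rightarrow> 'a" where
  "GG q n j = (\<Sum>J\<in>{J. J \<subseteq> {1..n} \<and> card J = j}. PP q n J)"

lemma stB_ins: "i \<le> n \<Longrightarrow> stB (insert (Suc n) J) i = stB J i"
proof -
  assume "i \<le> n"
  then have "{1..<i} - insert (Suc n) J = {1..<i} - J" by auto
  with \<open>i \<le> n\<close> show ?thesis unfolding stB_def by auto
qed

lemma card_last: "J \<subseteq> {1..n} \<Longrightarrow> card ({1..<Suc n} - J) = n - card J"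
proof -
  assume "J \<subseteq> {1..n}"
  moreover have "{1..<Suc n} = {1..n}" by auto
  ultimately show ?thesis by (simp add: card_Diff_subset finite_subset)
qed

lemma stB_last1: "J \<subseteq> {1..n} \<Longrightarrow> stB J (Suc n) = 2*(n - card J) + 1"
  unfolding stB_def using card_last[of J n] by auto

lemma stB_last2: "J \<subseteq> {1..n} \<Longrightarrow> stB (insert (Suc n) J) (Suc n) = 2*(n - card J)"
proof -
  assume a: "J \<subseteq> {1..n}"
  have "{1..<Suc n} - insert (Suc n) J = {1..<Suc n} - J" by auto
  then show ?thesis unfolding stB_def using card_last[OF a] by auto
qed

lemma PP_Suc1: "J \<subseteq> {1..n} \<Longrightarrow> PP q (Suc n) J = qint q (2*(n - card J) + 2) * PP q n J"
  unfolding PP_def by (simp add: prod.nat_ivl_Suc' stB_last1)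

lemma PP_Suc2: "J \<subseteq> {1..n} \<Longrightarrow> PP q (Suc n) (insert (Suc n) J) = qint q (2*(n - card J) + 1) * PP q n J"
proof -
  assume a: "J \<subseteq> {1..n}"
  have "PP q (Suc n) (insert (Suc n) J) = qint q (2*(n - card J) + 1) * (\<Prod>i=1..n. qint q (stB (insert (Suc n) J) i + 1))"
    unfolding PP_def by (simp add: prod.nat_ivl_Suc' stB_last2[OF a])
  also have "(\<Prod>i=1..n. qint q (stB (insert (Suc n) J) i + 1)) = PP q n J"
    unfolding PP_def by (rule prod.cong) (auto simp: stB_ins)
  finally show ?thesis .
qed

lemma A0: "{J. J \<subseteq> {1..(m::nat)} \<and> card J = 0} = {{}}"
proof -
  have "J \<subseteq> {1..m} \<Longrightarrow> card J = 0 \<Longrightarrow> J = {}" for J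
  proof -
    assume "J \<subseteq> {1..m}" "card J = 0"
    moreover have "finite J" by (rule finite_subset[OF \<open>J \<subseteq> {1..m}\<close>]) simp
    ultimately show ?thesis by simp
  qed
  then show ?thesis by auto
qed

lemma GG_empty: "n < j \<Longrightarrow> GG q n j = 0"
proof -
  assume "n < j"
  have "{J. J \<subseteq> {1..n} \<and> card J = j} = {}"
  proof -
    have "J \<subseteq> {1..n} \<Longrightarrow> card J \<le> n" for J using card_mono[of "{1..n}" J] by simp
    then show ?thesis using \<open>n < j\<close> by (metis (mono_tags, lifting) Collect_empty_eq not_le)
  qed
  then show ?thesis by (simp only: GG_def sum.empty)
qed

lemma GG_Suc: "GG q (Suc n) j = qint q (2*(n - j) + 2) * GG q n j
   + (if j = 0 then 0 else qint q (2*(n - (j - 1)) + 1) * GG q n (j - 1))"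
proof -
  let ?A = "\<lambda>j. {J. J \<subseteq> {1..n} \<and> card J = j}"
  have fin: "finite (?A j)" for j
    by (rule finite_subset[of _ "Pow {1..n}"]) auto
  have s1: "(\<Sum>J\<in>?A j. PP q (Suc n) J) = qint q (2*(n - j) + 2) * GG q n j"
    unfolding GG_def sum_distrib_left by (rule sum.cong) (auto simp: PP_Suc1)
  show ?thesis
  proof (cases "j = 0")
    case True
    have "{J. J \<subseteq> {1..Suc n} \<and> card J = j} = ?A j"
      using A0[of "Suc n"] A0[of n] True by simp
    then show ?thesis using s1 True unfolding GG_def by simp
  next
    case False
    have eq: "{J. J \<subseteq> {1..Suc n} \<and> card J = j} = ?A j \<union> insert (Suc n) ` ?A (j - 1)"
    proof (rule set_eqI, rule iffI)
      fix J assume "J \<in> {J. J \<subseteq> {1..Suc n} \<and> card J = j}"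
      then have a: "J \<subseteq> {1..Suc n}" "card J = j" by auto
      have fJ: "finite J" using a(1) finite_subset by blast
      show "J \<in> ?A j \<union> insert (Suc n) ` ?A (j - 1)"
      proof (cases "Suc n \<in> J")
        case False
        then have "J \<subseteq> {1..n}" using a(1) by (auto simp: le_Suc_eq)
        then show ?thesis using a(2) by auto
      next
        case True
        have "J - {Suc n} \<in> ?A (j - 1)" using a(1,2) fJ True by (auto simp: le_Suc_eq)
        moreover have "J = insert (Suc n) (J - {Suc n})" using True by auto
        ultimately show ?thesis by blast
      qed
    next
      fix J assume "J \<in> ?A j \<union> insert (Suc n) ` ?A (j - 1)"
      then show "J \<in> {J. J \<subseteq> {1..Suc n} \<and> card J = j}"
      proof
        assume "J \<in> ?A j" then show ?thesis by auto
      next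
        assume "J \<in> insert (Suc n) ` ?A (j - 1)"
        then obtain J' where J': "J' \<subseteq> {1..n}" "card J' = j - 1" "J = insert (Suc n) J'" by auto
        then have "finite J'" "Suc n \<notin> J'" using finite_subset by auto
        then show ?thesis using J' False by auto
      qed
    qed
    have disj: "?A j \<inter> insert (Suc n) ` ?A (j - 1) = {}" by auto
    have inj: "inj_on (insert (Suc n)) (?A (j - 1))"
    proof (rule inj_onI)
      fix x y assume "x \<in> ?A (j - 1)" "y \<in> ?A (j - 1)" "insert (Suc n) x = insert (Suc n) y"
      moreover have "Suc n \<notin> x" "Suc n \<notin> y" using calculation by auto
      ultimately show "x = y" by (metis Diff_insert_absorb)
    qed
    have "GG q (Suc n) j = (\<Sum>J\<in>?A j. PP q (Suc n) J) + (\<Sum>J\<in>insert (Suc n) ` ?A (j - 1). PP q (Suc n) J)"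
      unfolding GG_def eq by (rule sum.union_disjoint) (use fin disj in auto)
    also have "(\<Sum>J\<in>insert (Suc n) ` ?A (j - 1). PP q (Suc n) J) = (\<Sum>J\<in>?A (j - 1). PP q (Suc n) (insert (Suc n) J))"
      by (rule sum.reindex[OF inj, unfolded comp_def])
    also have "\<dots> = qint q (2*(n - (j - 1)) + 1) * GG q n (j - 1)"
      unfolding GG_def sum_distrib_left by (rule sum.cong) (auto simp: PP_Suc2)
    finally show ?thesis using s1 False by simp
  qed
qed

lemma stirB_zero: "n < k \<Longrightarrow> stirB q n k = 0"
  by (induction n arbitrary: k) auto

lemma main: "j \<le> n \<Longrightarrow> GG q n j = qdfact q (2 * (n - j)) * stirB q n (n - j)"
proof (induction n arbitrary: j)
  case 0
  have "{J::nat set. J = {} \<and> card J = 0} = {{}}" by auto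
  then show ?case using 0 unfolding GG_def PP_def by simp
next
  case (Suc n)
  show ?case
  proof (cases "j = Suc n")
    case True
    then show ?thesis using GG_Suc[of q n j] GG_empty[where q=q and n=n and j=j] Suc.IH[of n]
      by (simp add: qint_def)
  next
    case False
    then have jn: "j \<le> n" using Suc.prems by auto
    obtain k where k: "Suc n - j = Suc k" using jn by (metis Suc_diff_le)
    have nk: "n - j = k" using k jn by simp
    have qd: "qdfact q (2 * Suc k) = qint q (2 * Suc k) * qdfact q (2 * k)" by simp
    show ?thesis
    proof (cases "j = 0")
      case True
      then show ?thesis using GG_Suc[of q n j] Suc.IH[OF jn] stirB_zero[of n "Suc n" q] nk k
        by (simp add: algebra_simps)
    next
      case j0: False
      have ih2: "GG q n (j - 1) = qdfact q (2 * Suc k) * stirB q n (Suc k)"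
        using Suc.IH[of "j - 1"] jn j0 nk by (simp add: Suc_diff_le)
      have "n - (j - 1) = Suc k" using nk jn j0 by simp
      then show ?thesis using GG_Suc[of q n j] Suc.IH[OF jn] ih2 nk k j0 qd
        by (simp add: algebra_simps)
    qed
  qed
qed

theorem mainTheorem1:
  fixes q :: "'a::comm_ring_1" and n k :: nat
  assumes "n \<ge> 1" and "k \<le> n"
  shows "(\<Sum>J\<in>{J. J \<subseteq> {1..n} \<and> card J = n - k}.
            \<Prod>i=1..n. qint q (stB J i + 1))
         = qdfact q (2 * k) * stirB q n k"
  using main[of "n - k" n q] assms unfolding GG_def PP_def by simp

end
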